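(* If the function $\dot f^{-1}$ is strictly positive (that is, $\dot f^{-1}:\mathbb{R}\to(0,\infty)$), then $\mathcal{A}_{Q,z}=(0,\infty)$.
   Context: Setting. - $\mathcal{M}\subseteq\mathbb{R}^d$; $h:\mathcal{M}\times\mathcal{X}\to\mathcal{Y}$; the loss $\ell:\mathcal{Y}\times\mathcal{Y}\to[0,\infty)$ satisfies $\ell(y,y)=0$. - For a dataset $z=((x_1,y_1),\dots,(x_n,y_n))$, $L_z(\theta)=\frac1n\sum_i\ell(h(\theta,x_i),y_i)$. - $Q$ is a Borel probability measure on $\mathcal{M}$. - $f:[0,\infty)\to\mathbb{R}$ is convex with $f(1)=0$, and is strictly convex and differentiable. - $\dot f$ is its derivative on $(0,\infty)$ and $\dot f^{-1}$ the inverse of $\dot f$. Admissible regularization factors. $\mathcal{A}_{Q,z}\subseteq(0,\infty)$ is the set of $\lambda>0$ for which there exists $\beta\in\mathbb{R}$ with $\dot f^{-1}\big(-\frac{\beta+L_z(\theta)}{\lambda}\big)>0$ for all $\theta\in\operatorname{supp}Q$ and $\int\dot f^{-1}\big(-\frac{\beta+L_z(\theta)}{\lambda}\big)dQ(\theta)=1$. *)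

theory Defs
  imports "HOL-Analysis.Analysis" "HOL-Probability.Probability"
begin

definition strictly_convex_on :: "real set \<Rightarrow> (real \<Rightarrow> real) \<Rightarrow> bool" where
  "strictly_convex_on S f \<longleftrightarrow>
     (\<forall>x\<in>S. \<forall>y\<in>S. x \<noteq> y \<longrightarrow>
        (\<forall>t::real. 0 < t \<and> t < 1 \<longrightarrow> f ((1 - t) * x + t * y) < (1 - t) * f x + t * f y))"

definition emp_risk :: "('m \<Rightarrow> 'x \<Rightarrow> 'y) \<Rightarrow> ('y \<Rightarrow> 'y \<Rightarrow> real) \<Rightarrow> ('x \<times> 'y) list \<Rightarrow> 'm \<Rightarrow> real" where
  "emp_risk h loss z \<theta> =
     (\<Sum>i<length z. loss (h \<theta> (fst (z ! i))) (snd (z ! i))) / real (length z)"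

definition msupp :: "'a::topological_space measure \<Rightarrow> 'a set" where
  "msupp Q = {\<theta> \<in> space Q. \<forall>U. open U \<and> \<theta> \<in> U \<longrightarrow> emeasure Q (U \<inter> space Q) > 0}"

text \<open>Admissible regularization factors A_{Q,z}, with finv the inverse of the
  derivative of f, and L the empirical risk L_z.\<close>
definition admissible :: "(real \<Rightarrow> real) \<Rightarrow> 'a::topological_space measure \<Rightarrow> ('a \<Rightarrow> real) \<Rightarrow> real set" where
  "admissible finv Q L =
     {r. r > 0 \<and> (\<exists>\<beta>::real.
        (\<forall>\<theta>\<in>msupp Q. finv (- (\<beta> + L \<theta>) / r) > 0) \<and>
        integrable Q (\<lambda>\<theta>. finv (- (\<beta> + L \<theta>) / r)) \<and>
        (\<integral>\<theta>. finv (- (\<beta> + L \<theta>) / r) \<partial>Q) = 1)}"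

end

theory Submission
  imports Defs
begin

theorem lemma3:
  fixes M :: "(real ^ 'd) set"
    and h :: "real ^ 'd \<Rightarrow> 'x \<Rightarrow> 'y"
    and loss :: "'y \<Rightarrow> 'y \<Rightarrow> real"
    and z :: "('x \<times> 'y) list"
    and Q :: "(real ^ 'd) measure"
    and f fdot finv :: "real \<Rightarrow> real"
  assumes loss_nonneg: "\<And>y y'. loss y y' \<ge> 0"
    and loss_refl: "\<And>y. loss y y = 0"
    and Q_prob: "prob_space Q"
    and Q_borel: "sets Q = sets (restrict_space borel M)"
    and L_meas: "emp_risk h loss z \<in> borel_measurable Q"
    and f_convex: "convex_on {0..} f"
    and f_one: "f 1 = 0"
    and f_strict: "strictly_convex_on {0..} f"
    and f_deriv: "\<And>x. x > 0 \<Longrightarrow> (f has_real_derivative fdot x) (at x)"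
    and finv_inv1: "\<And>x. x > 0 \<Longrightarrow> finv (fdot x) = x"
    and finv_inv2: "\<And>t. fdot (finv t) = t"
    and finv_pos: "\<And>t. finv t > 0"
  shows "admissible finv Q (emp_risk h loss z) = {0<..}"
proof -
  interpret P: prob_space Q by (rule Q_prob)
  define L where "L = emp_risk h loss z"
  have Lnn: "L \<theta> \<ge> 0" for \<theta>
    unfolding L_def emp_risk_def by (intro divide_nonneg_nonneg sum_nonneg loss_nonneg) auto
  have Lm: "L \<in> borel_measurable Q" using L_meas L_def by simp
  have fdot_mono: "fdot a \<le> fdot b" if "0 < a" "a \<le> b" for a b
  proof -
    have int: "interior {0::real..} = {0<..}" by simp
    have da: "(f has_field_derivative fdot a) (at a within {0..})"
      using f_deriv[of a] that has_field_derivative_at_within by blast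
    have db: "(f has_field_derivative fdot b) (at b within {0..})"
      using f_deriv[of b] that has_field_derivative_at_within by auto
    have 1: "f b - f a \<ge> fdot a * (b - a)"
      by (rule convex_on_imp_above_tangent[OF f_convex _ _ _ da]) (use that in \<open>auto simp: int\<close>)
    have 2: "f a - f b \<ge> fdot b * (a - b)"
      by (rule convex_on_imp_above_tangent[OF f_convex _ _ _ db]) (use that in \<open>auto simp: int\<close>)
    show ?thesis
    proof (cases "a = b")
      case False
      with that have "b - a > 0" by simp
      from 1 2 have "(fdot a - fdot b) * (b - a) \<le> 0" by (simp add: algebra_simps)
      with \<open>b - a > 0\<close> show ?thesis by (simp add: mult_le_0_iff)
    qed simp
  qed
  have finv_mono: "finv s \<le> finv t" if "s \<le> t" for s t
  proof (rule ccontr)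
    assume "\<not> finv s \<le> finv t"
    then have "finv t < finv s" by simp
    then have "fdot (finv t) \<le> fdot (finv s)" using fdot_mono finv_pos by (simp add: less_imp_le)
    then have "t \<le> s" by (simp add: finv_inv2)
    with that have "s = t" by simp
    with \<open>finv t < finv s\<close> show False by simp
  qed
  have range_finv: "range finv = {0<..}"
  proof
    show "range finv \<subseteq> {0<..}" using finv_pos by auto
    show "{0<..} \<subseteq> range finv"
    proof
      fix x :: real assume "x \<in> {0<..}"
      then have "finv (fdot x) = x" using finv_inv1 by simp
      then show "x \<in> range finv" by (metis rangeI)
    qed
  qed
  have finv_cont: "continuous_on UNIV finv"
    by (rule continuous_onI_mono) (auto simp: range_finv finv_mono)
  have isc: "isCont finv t" for t
    using finv_cont by (simp add: continuous_on_eq_continuous_at)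
  have finv_meas: "finv \<in> borel_measurable borel"
    using finv_cont by (rule borel_measurable_continuous_onI)
  have "r \<in> admissible finv Q L" if r: "r > 0" for r
  proof -
    define G where "G b \<theta> = finv (- (b + L \<theta>) / r)" for b \<theta>
    have Gm: "G b \<in> borel_measurable Q" for b
      unfolding G_def using Lm by (intro measurable_compose[OF _ finv_meas]) (measurable; simp)
    have Gbound: "G b \<theta> \<le> finv (- b / r)" for b \<theta>
      unfolding G_def using Lnn[of \<theta>] r by (intro finv_mono) (simp add: field_simps)
    have Gbound2: "G b \<theta> \<le> finv (- c / r)" if "c \<le> b" for b c \<theta>
      using Gbound[of b \<theta>] finv_mono[of "- b / r" "- c / r"] that r
      by (smt (verit, ccfv_SIG) divide_right_mono)
    have Gint: "integrable Q (G b)" for b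
      by (rule P.integrable_const_bound[where B="finv (- b / r)"])
         (use Gbound finv_pos in \<open>auto simp: G_def less_imp_le intro!: Gm\<close>)
    define g where "g b = (\<integral>\<theta>. G b \<theta> \<partial>Q)" for b
    define b2 where "b2 = - r * fdot 1"
    have "g b2 \<le> 1"
    proof -
      have "g b2 \<le> (\<integral>\<theta>. 1 \<partial>Q)"
        unfolding g_def
      proof (rule integral_mono[OF Gint])
        fix \<theta> have "G b2 \<theta> \<le> finv (- b2 / r)" by (rule Gbound)
        also have "- b2 / r = fdot 1" using r by (simp add: b2_def)
        finally show "G b2 \<theta> \<le> 1" using finv_inv1[of 1] by simp
      qed simp
      then show ?thesis by (simp add: P.prob_space)
    qed
    define A where "A n = {\<theta> \<in> space Q. L \<theta> \<le> real n}" for n :: nat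
    have Asets: "A n \<in> sets Q" for n unfolding A_def using Lm by measurable
    have "(\<lambda>n. measure Q (A n)) \<longlonglongrightarrow> measure Q (\<Union>n. A n)"
      by (rule P.finite_Lim_measure_incseq) (use Asets in blast, auto simp: incseq_def A_def)
    moreover have "(\<Union>n. A n) = space Q"
      by (auto simp: A_def) (meson real_arch_simple)
    ultimately have "(\<lambda>n. measure Q (A n)) \<longlonglongrightarrow> 1" by (simp add: P.prob_space)
    then have "eventually (\<lambda>n. measure Q (A n) > 1/2) sequentially"
      by (rule order_tendstoD) simp
    then obtain n where n: "measure Q (A n) > 1/2" by (auto simp: eventually_sequentially)
    define b1 where "b1 = - real n - r * fdot 2"
    have "b1 \<le> b2"
    proof -
      have "fdot 1 \<le> fdot 2" using fdot_mono[of 1 2] by simp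
      then have "r * fdot 1 \<le> r * fdot 2" using r by (simp add: mult_left_mono)
      then show ?thesis unfolding b1_def b2_def by simp
    qed
    have "1 \<le> g b1"
    proof -
      have "(\<integral>\<theta>. 2 * indicator (A n) \<theta> \<partial>Q) \<le> g b1"
        unfolding g_def
      proof (rule integral_mono[OF _ Gint])
        show "integrable Q (\<lambda>\<theta>. 2 * indicator (A n) \<theta> :: real)"
        proof (intro integrable_mult_right integrable_real_indicator)
          show "A n \<in> sets Q" by (rule Asets)
          show "emeasure Q (A n) < \<infinity>"
            using P.emeasure_finite[of "A n"] by (simp add: less_top[symmetric])
        qed
        fix \<theta> assume th: "\<theta> \<in> space Q"
        show "2 * indicator (A n) \<theta> \<le> G b1 \<theta>"
        proof (cases "\<theta> \<in> A n")
          case True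
          then have "L \<theta> \<le> real n" by (simp add: A_def)
          then have "fdot 2 \<le> - (b1 + L \<theta>) / r" using r
            by (simp add: b1_def field_simps)
          then have "finv (fdot 2) \<le> G b1 \<theta>" unfolding G_def by (rule finv_mono)
          then show ?thesis using True finv_inv1[of 2] by simp
        next
          case False then show ?thesis using finv_pos by (simp add: G_def less_imp_le)
        qed
      qed
      moreover have "(\<integral>\<theta>. 2 * indicator (A n) \<theta> \<partial>Q) = 2 * measure Q (A n)"
        using Asets by (simp add: sets.Int_space_eq2)
      ultimately show ?thesis using n by simp
    qed
    have gcont: "continuous_on {b1..b2} g"
    proof (rule continuous_on_sequentiallyI)
      fix u a assume u: "\<forall>n. u n \<in> {b1..b2}" and a: "a \<in> {b1..b2}" and ua: "u \<longlonglongrightarrow> a"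
      show "(\<lambda>n. g (u n)) \<longlonglongrightarrow> g a"
        unfolding g_def
      proof (rule integral_dominated_convergence[where w="\<lambda>_. finv (- b1 / r)"])
        show "G a \<in> borel_measurable Q" "\<And>i. G (u i) \<in> borel_measurable Q" by (rule Gm)+
        show "integrable Q (\<lambda>_. finv (- b1 / r))" by simp
        show "AE x in Q. (\<lambda>i. G (u i) x) \<longlonglongrightarrow> G a x"
        proof (intro AE_I2)
          fix x
          have "(\<lambda>i. - (u i + L x) / r) \<longlonglongrightarrow> - (a + L x) / r"
            by (intro tendsto_intros ua) (use r in auto)
          then show "(\<lambda>i. G (u i) x) \<longlonglongrightarrow> G a x"
            unfolding G_def by (rule isCont_tendsto_compose[OF isc])
        qed
        show "AE x in Q. norm (G (u i) x) \<le> finv (- b1 / r)" for i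
          using u Gbound2[of b1 "u i"] finv_pos by (auto simp: G_def less_imp_le)
      qed
    qed
    obtain b where "g b = 1"
      using IVT2'[of g b2 1 b1, OF \<open>g b2 \<le> 1\<close> \<open>1 \<le> g b1\<close> \<open>b1 \<le> b2\<close> gcont] by auto
    have i1: "integrable Q (\<lambda>\<theta>. finv (- (b + L \<theta>) / r))" using Gint[of b] unfolding G_def .
    have i2: "(\<integral>\<theta>. finv (- (b + L \<theta>) / r) \<partial>Q) = 1" using \<open>g b = 1\<close> unfolding g_def G_def .
    show ?thesis
      unfolding admissible_def mem_Collect_eq
      by (intro conjI r exI[of _ b] ballI finv_pos i1 i2)
  qed
  moreover have "admissible finv Q L \<subseteq> {0<..}" unfolding admissible_def by auto
  ultimately show ?thesis unfolding L_def by auto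
qed

end
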